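(* Let $G=(V,E)$ be a connected undirected graph (finite or infinite). Then $G$ has a partition $F_G\neq\{V\}$ of $V$ into maximal ``strong'' partitive sets if and only if $G$ has a multiplex $M_G$ with $\widetilde{M_G}=V$.
   Context: A graph $G=(V,E)$ has vertex set $V$ and edge set $E\subseteq V^2$; it is undirected if $E$ is irreflexive and symmetric. A set $X\subseteq V$ is a partitive set of $G$ if for all $a,b\in X$ and $c\in V\setminus X$: $(a,c)\in E\Leftrightarrow(b,c)\in E$ and $(c,a)\in E\Leftrightarrow(c,b)\in E$; $I(G)$ is the class of partitive sets. A ``strong'' partitive set is an $X\in I(G)$ such that for every $Y\in I(G)$ with $X\cap Y\neq\emptyset$, $X\subseteq Y$ or $Y\subseteq X$; $I_F(G)$ is their class. A maximal ``strong'' partitive set is an element of $I_F(G)\setminus\{V\}$ maximal for inclusion in $I_F(G)\setminus\{V\}$. Implication classes: on $E$ define $(a,b)\Gamma(a',b')$ iff either $a=a'$ and $(b,b')\notin E$, or $b=b'$ and $(a,a')\notin E$; the classes of the transitive closure $\Gamma^*$ are the implication classes. For an implication class $A$, $A^{-1}=\{(b,a):(a,b)\in A\}$ and the color class is $\widehat A=A\cup A^{-1}$. A simplex of rank $r\ge1$ is a complete sub-graph $S=(V_S,E_S)$ of $G$ on $r+1$ vertices whose distinct undirected edges lie in distinct color classes. A multiplex is a set $M(S)=\bigcup\{\widehat A:\widehat A\text{ a color class},\ \widehat A\cap E_S\neq\emptyset\}$ for a simplex $S$; $\widetilde M$ is the set of vertices spanned by $M$. *)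

theory Defs
  imports Main "HOL-Library.Disjoint_Sets"
begin

definition graph :: "'a set \<Rightarrow> ('a \<times> 'a) set \<Rightarrow> bool" where
  "graph V E \<longleftrightarrow> E \<subseteq> V \<times> V"

definition undirected_graph :: "'a set \<Rightarrow> ('a \<times> 'a) set \<Rightarrow> bool" where
  "undirected_graph V E \<longleftrightarrow> graph V E \<and> irrefl E \<and> sym E"

definition connected_graph :: "'a set \<Rightarrow> ('a \<times> 'a) set \<Rightarrow> bool" where
  "connected_graph V E \<longleftrightarrow> V \<noteq> {} \<and> (\<forall>a\<in>V. \<forall>b\<in>V. (a, b) \<in> (E \<inter> V \<times> V)\<^sup>*)"

definition partitive :: "'a set \<Rightarrow> ('a \<times> 'a) set \<Rightarrow> 'a set \<Rightarrow> bool" where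
  "partitive V E X \<longleftrightarrow> X \<subseteq> V \<and>
     (\<forall>a\<in>X. \<forall>b\<in>X. \<forall>c\<in>V - X.
        ((a, c) \<in> E \<longleftrightarrow> (b, c) \<in> E) \<and> ((c, a) \<in> E \<longleftrightarrow> (c, b) \<in> E))"

definition strong_partitive :: "'a set \<Rightarrow> ('a \<times> 'a) set \<Rightarrow> 'a set \<Rightarrow> bool" where
  "strong_partitive V E X \<longleftrightarrow> partitive V E X \<and>
     (\<forall>Y. partitive V E Y \<longrightarrow> X \<inter> Y \<noteq> {} \<longrightarrow> X \<subseteq> Y \<or> Y \<subseteq> X)"

definition maximal_strong_partitive :: "'a set \<Rightarrow> ('a \<times> 'a) set \<Rightarrow> 'a set \<Rightarrow> bool" where
  "maximal_strong_partitive V E X \<longleftrightarrow> strong_partitive V E X \<and> X \<noteq> V \<and>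
     (\<forall>Y. strong_partitive V E Y \<longrightarrow> Y \<noteq> V \<longrightarrow> X \<subseteq> Y \<longrightarrow> Y = X)"

definition Gamma :: "('a \<times> 'a) set \<Rightarrow> (('a \<times> 'a) \<times> ('a \<times> 'a)) set" where
  "Gamma E = {((a, b), (a', b')). (a, b) \<in> E \<and> (a', b') \<in> E \<and>
     ((a = a' \<and> (b, b') \<notin> E) \<or> (b = b' \<and> (a, a') \<notin> E))}"

definition implication_class :: "('a \<times> 'a) set \<Rightarrow> ('a \<times> 'a) set \<Rightarrow> bool" where
  "implication_class E A \<longleftrightarrow> (\<exists>e\<in>E. A = (Gamma E)\<^sup>+ `` {e})"

definition color_class :: "('a \<times> 'a) set \<Rightarrow> ('a \<times> 'a) set \<Rightarrow> bool" where
  "color_class E C \<longleftrightarrow> (\<exists>A. implication_class E A \<and> C = A \<union> A\<inverse>)"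

text \<open>A simplex of rank r \<ge> 1 (r + 1 = number of vertices, possibly infinite):
  a complete subgraph on the vertex set S with at least two vertices whose
  distinct undirected edges lie in distinct color classes.\<close>
definition simplex :: "'a set \<Rightarrow> ('a \<times> 'a) set \<Rightarrow> 'a set \<Rightarrow> bool" where
  "simplex V E S \<longleftrightarrow> S \<subseteq> V \<and> (\<exists>a\<in>S. \<exists>b\<in>S. a \<noteq> b) \<and>
     (\<forall>a\<in>S. \<forall>b\<in>S. a \<noteq> b \<longrightarrow> (a, b) \<in> E) \<and>
     (\<forall>C. color_class E C \<longrightarrow>
        (\<forall>a b c d. (a, b) \<in> C \<inter> (S \<times> S) \<longrightarrow> (c, d) \<in> C \<inter> (S \<times> S) \<longrightarrow>
            {a, b} = {c, d}))"

definition multiplex_of :: "'a set \<Rightarrow> ('a \<times> 'a) set \<Rightarrow> 'a set \<Rightarrow> ('a \<times> 'a) set" where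
  "multiplex_of V E S = \<Union>{C. color_class E C \<and> C \<inter> (E \<inter> S \<times> S) \<noteq> {}}"

definition multiplex :: "'a set \<Rightarrow> ('a \<times> 'a) set \<Rightarrow> ('a \<times> 'a) set \<Rightarrow> bool" where
  "multiplex V E M \<longleftrightarrow> (\<exists>S. simplex V E S \<and> M = multiplex_of V E S)"

definition spanned :: "('a \<times> 'a) set \<Rightarrow> 'a set" where
  "spanned M = Domain M \<union> Range M"

end

theory Submission
  imports Defs
begin

definition gcompl :: "'a set \<Rightarrow> ('a \<times> 'a) set \<Rightarrow> ('a \<times> 'a) set" where
  "gcompl V E = {(a, b). a \<in> V \<and> b \<in> V \<and> a \<noteq> b \<and> (a, b) \<notin> E}"

definition cocomp :: "('a \<times> 'a) set \<Rightarrow> 'a set \<Rightarrow> 'a \<Rightarrow> 'a set" where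
  "cocomp N P x = {y. (x, y) \<in> (N \<inter> P \<times> P)\<^sup>*}"

definition Umod :: "'a set \<Rightarrow> ('a \<times> 'a) set \<Rightarrow> 'a \<Rightarrow> 'a set" where
  "Umod V E v = \<Union>{Y. partitive V E Y \<and> Y \<noteq> V \<and> v \<in> Y}"

lemma leave_set:
  assumes "(a, b) \<in> R\<^sup>*" "a \<in> A" "b \<notin> A"
  shows "\<exists>p q. p \<in> A \<and> q \<notin> A \<and> (p, q) \<in> R \<and> (a, p) \<in> R\<^sup>*"
  using assms
proof (induction rule: rtrancl_induct)
  case base then show ?case by simp
next
  case (step y z)
  show ?case
  proof (cases "y \<in> A")
    case True then show ?thesis using step by blast
  next
    case False then show ?thesis using step by blast
  qed
qed

lemma partitive_compl_iff: "partitive V (gcompl V E) X = partitive V E X"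
  unfolding partitive_def gcompl_def by auto

lemma strong_compl_iff: "strong_partitive V (gcompl V E) X = strong_partitive V E X"
  unfolding strong_partitive_def partitive_compl_iff ..

lemma maxstrong_compl_iff: "maximal_strong_partitive V (gcompl V E) X = maximal_strong_partitive V E X"
  unfolding maximal_strong_partitive_def strong_compl_iff ..

lemma compl_compl: "undirected_graph V E \<Longrightarrow> gcompl V (gcompl V E) = E"
  unfolding gcompl_def undirected_graph_def graph_def irrefl_def by auto

lemma undirected_compl: "undirected_graph V E \<Longrightarrow> undirected_graph V (gcompl V E)"
  unfolding gcompl_def undirected_graph_def graph_def irrefl_def sym_def by auto

lemma connected_compl_compl: "undirected_graph V E \<Longrightarrow>
   connected_graph V (gcompl V (gcompl V E)) = connected_graph V E"
  by (simp add: compl_compl)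

locale ug =
  fixes V :: "'a set" and E :: "('a \<times> 'a) set"
  assumes ug: "undirected_graph V E"
begin

lemma EV: "(a, b) \<in> E \<Longrightarrow> a \<in> V \<and> b \<in> V"
  using ug unfolding undirected_graph_def graph_def by auto

lemma Esym: "(a, b) \<in> E \<Longrightarrow> (b, a) \<in> E"
  using ug unfolding undirected_graph_def sym_def by auto

lemma Esym_iff: "(a, b) \<in> E \<longleftrightarrow> (b, a) \<in> E"
  using Esym by blast

lemma Eirr: "(a, a) \<notin> E"
  using ug unfolding undirected_graph_def irrefl_def by auto

abbreviation "N \<equiv> gcompl V E"

lemma N_iff: "(a, b) \<in> N \<longleftrightarrow> a \<in> V \<and> b \<in> V \<and> a \<noteq> b \<and> (a, b) \<notin> E"
  unfolding gcompl_def by auto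

lemma Nsym: "(a, b) \<in> N \<Longrightarrow> (b, a) \<in> N"
  using N_iff Esym by blast

lemma part_sub: "partitive V E X \<Longrightarrow> X \<subseteq> V"
  unfolding partitive_def by auto

lemma part_adj: "partitive V E X \<Longrightarrow> a \<in> X \<Longrightarrow> b \<in> X \<Longrightarrow> c \<in> V \<Longrightarrow> c \<notin> X \<Longrightarrow>
   (a, c) \<in> E \<longleftrightarrow> (b, c) \<in> E"
  unfolding partitive_def by blast

lemma partI: "X \<subseteq> V \<Longrightarrow> (\<And>a b c. a \<in> X \<Longrightarrow> b \<in> X \<Longrightarrow> c \<in> V \<Longrightarrow> c \<notin> X \<Longrightarrow>
   (a, c) \<in> E \<Longrightarrow> (b, c) \<in> E) \<Longrightarrow> partitive V E X"
  unfolding partitive_def using Esym by blast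

lemma part_union_family:
  assumes "\<And>Y. Y \<in> \<Y> \<Longrightarrow> partitive V E Y \<and> x0 \<in> Y"
  shows "partitive V E (\<Union>\<Y>)"
proof (rule partI)
  show "\<Union>\<Y> \<subseteq> V" using assms part_sub by blast
next
  fix a b c assume "a \<in> \<Union>\<Y>" "b \<in> \<Union>\<Y>" "c \<in> V" "c \<notin> \<Union>\<Y>" "(a, c) \<in> E"
  then obtain Y1 Y2 where "Y1 \<in> \<Y>" "Y2 \<in> \<Y>" "a \<in> Y1" "b \<in> Y2" by blast
  with assms \<open>c \<in> V\<close> \<open>c \<notin> \<Union>\<Y>\<close> \<open>(a, c) \<in> E\<close> show "(b, c) \<in> E"
    using part_adj by (metis UnionI)
qed

lemma part_union2:
  assumes "partitive V E Y" "partitive V E Q" "x \<in> Y" "x \<in> Q"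
  shows "partitive V E (Y \<union> Q)"
  using part_union_family[of "{Y, Q}" x] assms by auto

lemma UT:
  assumes "partitive V E A" "partitive V E B" "p \<in> A" "p \<notin> B" "q \<in> A" "q \<in> B"
    "r \<in> B" "r \<notin> A"
  shows "((p, q) \<in> E \<longleftrightarrow> (p, r) \<in> E) \<and> ((p, r) \<in> E \<longleftrightarrow> (q, r) \<in> E)"
proof -
  have V: "p \<in> V" "r \<in> V" using assms part_sub by auto
  have "(q, p) \<in> E \<longleftrightarrow> (r, p) \<in> E" using part_adj[OF assms(2) assms(6) assms(7) V(1) assms(4)] .
  moreover have "(p, r) \<in> E \<longleftrightarrow> (q, r) \<in> E" using part_adj[OF assms(1) assms(3) assms(5) V(2) assms(8)] .
  ultimately show ?thesis using Esym_iff by blast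
qed

lemma part_single: "v \<in> V \<Longrightarrow> partitive V E {v}"
  unfolding partitive_def by auto


lemma Gamma_iff: "((a, b), (a', b')) \<in> Gamma E \<longleftrightarrow> (a, b) \<in> E \<and> (a', b') \<in> E \<and>
     ((a = a' \<and> (b, b') \<notin> E) \<or> (b = b' \<and> (a, a') \<notin> E))"
  unfolding Gamma_def by auto

lemma Gamma_sym: "(e, f) \<in> Gamma E \<Longrightarrow> (f, e) \<in> Gamma E"
  by (cases e; cases f) (auto simp: Gamma_iff Esym_iff)

lemma Gamma_refl: "e \<in> E \<Longrightarrow> (e, e) \<in> Gamma E"
  by (cases e) (auto simp: Gamma_iff Eirr)

lemma Gamma_E: "(e, f) \<in> Gamma E \<Longrightarrow> e \<in> E \<and> f \<in> E"
  by (cases e; cases f) (auto simp: Gamma_iff)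

lemma Gammap_sym: "(e, f) \<in> (Gamma E)\<^sup>+ \<Longrightarrow> (f, e) \<in> (Gamma E)\<^sup>+"
proof -
  have "sym (Gamma E)" unfolding sym_def using Gamma_sym by blast
  then have "sym ((Gamma E)\<^sup>+)" by (rule sym_trancl)
  then show "(e, f) \<in> (Gamma E)\<^sup>+ \<Longrightarrow> (f, e) \<in> (Gamma E)\<^sup>+" unfolding sym_def by blast
qed

lemma Gammap_E: "(e, f) \<in> (Gamma E)\<^sup>+ \<Longrightarrow> f \<in> E"
  by (induction rule: trancl_induct) (auto dest: Gamma_E)

lemma Gammas_p: "e \<in> E \<Longrightarrow> (e, f) \<in> (Gamma E)\<^sup>* \<Longrightarrow> (e, f) \<in> (Gamma E)\<^sup>+"
  by (metis Gamma_refl r_into_trancl' rtranclD)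

lemma cc_cases: "color_class E C \<Longrightarrow>
   \<exists>e\<in>E. C = (Gamma E)\<^sup>+ `` {e} \<union> ((Gamma E)\<^sup>+ `` {e})\<inverse>"
  unfolding color_class_def implication_class_def by blast

lemma cc_of: "e \<in> E \<Longrightarrow> color_class E ((Gamma E)\<^sup>+ `` {e} \<union> ((Gamma E)\<^sup>+ `` {e})\<inverse>)"
  unfolding color_class_def implication_class_def by blast

lemma cc_mem: "e \<in> E \<Longrightarrow> e \<in> (Gamma E)\<^sup>+ `` {e} \<union> ((Gamma E)\<^sup>+ `` {e})\<inverse>"
  using Gamma_refl by blast

lemma cc_sub: "color_class E C \<Longrightarrow> C \<subseteq> E"
  using cc_cases Gammap_E Esym by fastforce

lemma G1:
  assumes "color_class E C" "(p, q) \<in> C" "(p, c) \<in> E" "(q, c) \<notin> E"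
  shows "(p, c) \<in> C"
proof -
  obtain e where e: "e \<in> E" "C = (Gamma E)\<^sup>+ `` {e} \<union> ((Gamma E)\<^sup>+ `` {e})\<inverse>"
    using cc_cases[OF assms(1)] by blast
  have pqE: "(p, q) \<in> E" using cc_sub assms by blast
  show ?thesis
  proof (cases "(e, (p, q)) \<in> (Gamma E)\<^sup>+")
    case True
    have "((p, q), (p, c)) \<in> Gamma E" using pqE assms by (simp add: Gamma_iff)
    then have "(e, (p, c)) \<in> (Gamma E)\<^sup>+" using True by (meson trancl_into_trancl)
    then show ?thesis using e by blast
  next
    case False
    then have T: "(e, (q, p)) \<in> (Gamma E)\<^sup>+" using e assms(2) by blast
    have "((q, p), (c, p)) \<in> Gamma E" using pqE assms by (simp add: Gamma_iff Esym_iff)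
    then have "(e, (c, p)) \<in> (Gamma E)\<^sup>+" using T by (meson trancl_into_trancl)
    then show ?thesis using e by blast
  qed
qed

lemma Gamma_inside:
  assumes "partitive V E Z" "((p, q), (p', q')) \<in> Gamma E" "p \<in> Z" "q \<in> Z"
  shows "p' \<in> Z \<and> q' \<in> Z"
proof -
  have E1: "(p', q') \<in> E" using assms(2) by (simp add: Gamma_iff)
  then have V: "p' \<in> V" "q' \<in> V" using EV by auto
  from assms(2) consider "p = p'" "(q, q') \<notin> E" | "q = q'" "(p, p') \<notin> E" by (auto simp: Gamma_iff)
  then show ?thesis
  proof cases
    case 1
    then show ?thesis using part_adj[OF assms(1) assms(3) assms(4) V(2)] E1 assms by auto
  next
    case 2
    then show ?thesis using part_adj[OF assms(1) assms(4) assms(3) V(1)] E1 assms Esym_iff by auto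
  qed
qed

lemma T2:
  assumes "partitive V E Z" "color_class E C" "(x, y) \<in> C" "x \<in> Z" "y \<in> Z"
  shows "C \<subseteq> Z \<times> Z"
proof -
  obtain e where e: "e \<in> E" "C = (Gamma E)\<^sup>+ `` {e} \<union> ((Gamma E)\<^sup>+ `` {e})\<inverse>"
    using cc_cases[OF assms(2)] by blast
  obtain g where g: "(e, g) \<in> (Gamma E)\<^sup>+" "g \<in> Z \<times> Z"
    using e assms by blast
  have inside: "f \<in> Z \<times> Z" if "(g, f) \<in> (Gamma E)\<^sup>+" for f
    using that
  proof (induction rule: trancl_induct)
    case (base y) then show ?case using g(2) Gamma_inside[OF assms(1)] by (cases g; cases y) auto
  next
    case (step y z) then show ?case using Gamma_inside[OF assms(1)] by (cases y; cases z) auto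
  qed
  have "f \<in> Z \<times> Z" if "(e, f) \<in> (Gamma E)\<^sup>+" for f
  proof -
    have "(g, e) \<in> (Gamma E)\<^sup>+" using g(1) Gammap_sym by blast
    then have "(g, f) \<in> (Gamma E)\<^sup>+" using that by (rule trancl_trans)
    then show ?thesis by (rule inside)
  qed
  then show ?thesis using e by blast
qed


lemma symR: "sym (N \<inter> P \<times> P)"
  unfolding sym_def using Nsym by blast

lemma rt_sym: "(x, y) \<in> (N \<inter> P \<times> P)\<^sup>* \<Longrightarrow> (y, x) \<in> (N \<inter> P \<times> P)\<^sup>*"
proof -
  have "sym ((N \<inter> P \<times> P)\<^sup>*)" by (rule sym_rtrancl[OF symR])
  then show "(x, y) \<in> (N \<inter> P \<times> P)\<^sup>* \<Longrightarrow> (y, x) \<in> (N \<inter> P \<times> P)\<^sup>*"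
    unfolding sym_def by blast
qed

lemma cocomp_self: "x \<in> cocomp N P x"
  unfolding cocomp_def by simp

lemma cocomp_sub: "x \<in> P \<Longrightarrow> cocomp N P x \<subseteq> P"
proof
  fix y assume "x \<in> P" "y \<in> cocomp N P x"
  then have "(x, y) \<in> (N \<inter> P \<times> P)\<^sup>*" unfolding cocomp_def by simp
  then show "y \<in> P" using \<open>x \<in> P\<close> by (induction rule: rtrancl_induct) auto
qed

lemma cocomp_eq: "y \<in> cocomp N P x \<Longrightarrow> cocomp N P y = cocomp N P x"
proof -
  assume "y \<in> cocomp N P x"
  then have "(x, y) \<in> (N \<inter> P \<times> P)\<^sup>*" unfolding cocomp_def by simp
  then have "(y, x) \<in> (N \<inter> P \<times> P)\<^sup>*" by (rule rt_sym)
  show ?thesis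
  proof (rule set_eqI)
    fix z
    show "z \<in> cocomp N P y \<longleftrightarrow> z \<in> cocomp N P x"
      unfolding cocomp_def mem_Collect_eq
      using \<open>(y, x) \<in> _\<close> \<open>(x, y) \<in> _\<close> rtrancl_trans by metis
  qed
qed

lemma cocomp_step: "u \<in> cocomp N P x \<Longrightarrow> (u, c) \<in> N \<Longrightarrow> u \<in> P \<Longrightarrow> c \<in> P \<Longrightarrow> c \<in> cocomp N P x"
  unfolding cocomp_def by (auto intro: rtrancl_into_rtrancl)

lemma cocomp_closure:
  assumes "P \<subseteq> V" "x \<in> P" "u \<in> cocomp N P x" "c \<in> P" "c \<notin> cocomp N P x"
  shows "(u, c) \<in> E"
proof (rule ccontr)
  assume "(u, c) \<notin> E"
  have "u \<in> P" using cocomp_sub assms by blast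
  then have "u \<noteq> c" using assms by auto
  then have "(u, c) \<in> N" using \<open>(u, c) \<notin> E\<close> assms \<open>u \<in> P\<close> N_iff by auto
  then show False using cocomp_step assms \<open>u \<in> P\<close> by blast
qed

lemma cocomp_part:
  assumes "partitive V E P" "x \<in> P"
  shows "partitive V E (cocomp N P x)"
proof (rule partI)
  have PV: "P \<subseteq> V" using part_sub assms by blast
  show "cocomp N P x \<subseteq> V" using cocomp_sub assms PV by blast
  fix a b c assume H: "a \<in> cocomp N P x" "b \<in> cocomp N P x" "c \<in> V" "c \<notin> cocomp N P x" "(a, c) \<in> E"
  show "(b, c) \<in> E"
  proof (cases "c \<in> P")
    case True then show ?thesis using cocomp_closure PV assms H by blast
  next
    case False
    have "a \<in> P" "b \<in> P" using H cocomp_sub assms by auto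
    then show ?thesis using part_adj[OF assms(1)] H False by blast
  qed
qed

lemma cocomp_strong:
  assumes P: "partitive V E P" "x \<in> P" and ne: "cocomp N P x \<noteq> P"
  shows "strong_partitive V E (cocomp N P x)"
  unfolding strong_partitive_def
proof (intro conjI allI impI)
  define K where "K = cocomp N P x"
  have PV: "P \<subseteq> V" using part_sub P by blast
  have KP: "K \<subseteq> P" using cocomp_sub P K_def by blast
  show "partitive V E (cocomp N P x)" using cocomp_part P by blast
  fix Q assume Q: "partitive V E Q" "cocomp N P x \<inter> Q \<noteq> {}"
  show "cocomp N P x \<subseteq> Q \<or> Q \<subseteq> cocomp N P x"
  proof (rule ccontr)
    assume "\<not> (cocomp N P x \<subseteq> Q \<or> Q \<subseteq> cocomp N P x)"
    then obtain a b c where abc: "a \<in> K" "a \<notin> Q" "b \<in> K" "b \<in> Q" "c \<in> Q" "c \<notin> K"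
      using Q(2) K_def by blast
    have QV: "Q \<subseteq> V" using part_sub Q by blast
    have "\<exists>p1 q1. p1 \<in> K \<and> p1 \<in> Q \<and> q1 \<in> K \<and> q1 \<notin> Q \<and> (p1, q1) \<notin> E"
    proof (cases "x \<in> Q")
      case True
      have "(x, a) \<in> (N \<inter> P \<times> P)\<^sup>*" using abc K_def cocomp_def by fastforce
      from leave_set[OF this True \<open>a \<notin> Q\<close>] obtain p q where
        pq: "p \<in> Q" "q \<notin> Q" "(p, q) \<in> N \<inter> P \<times> P" "(x, p) \<in> (N \<inter> P \<times> P)\<^sup>*" by blast
      have "p \<in> K" using pq K_def cocomp_def by fastforce
      then have "q \<in> K" using pq cocomp_step K_def by blast
      then show ?thesis using pq \<open>p \<in> K\<close> N_iff by blast
    next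
      case False
      have "(x, b) \<in> (N \<inter> P \<times> P)\<^sup>*" using abc K_def cocomp_def by fastforce
      from leave_set[OF this, of "- Q"] False abc obtain p q where
        pq: "p \<notin> Q" "q \<in> Q" "(p, q) \<in> N \<inter> P \<times> P" "(x, p) \<in> (N \<inter> P \<times> P)\<^sup>*" by auto
      have "p \<in> K" using pq K_def cocomp_def by fastforce
      then have "q \<in> K" using pq cocomp_step K_def by blast
      then show ?thesis using pq \<open>p \<in> K\<close> N_iff Esym_iff by blast
    qed
    then obtain p1 q1 where pq1: "p1 \<in> K" "p1 \<in> Q" "q1 \<in> K" "q1 \<notin> Q" "(p1, q1) \<notin> E" by blast
    have Kpart: "partitive V E K" using cocomp_part P K_def by blast
    have noadj: "(p1, c') \<notin> E" if "c' \<in> Q" "c' \<notin> K" for c'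
      using UT[OF Kpart Q(1) pq1(3) pq1(4) pq1(1) pq1(2) that(1) that(2)] pq1(5) Esym_iff by blast
    have cP: "c' \<notin> P" if "c' \<in> Q" "c' \<notin> K" for c'
      using noadj[OF that] cocomp_closure[OF PV P(2)] pq1(1) that K_def by blast
    obtain y where y: "y \<in> P" "y \<notin> K" using ne KP K_def by blast
    have yQ: "y \<notin> Q" using cP y by blast
    have cP': "c \<notin> P" using cP abc by blast
    have "p1 \<in> P" using KP pq1 by blast
    have "(y, p1) \<in> E \<longleftrightarrow> (p1, c) \<in> E"
      using UT[OF P(1) Q(1) y(1) yQ \<open>p1 \<in> P\<close> pq1(2) abc(5) cP'] by blast
    moreover have "(p1, y) \<in> E" using cocomp_closure[OF PV P(2)] pq1(1) y K_def by blast
    ultimately show False using noadj abc Esym_iff by blast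
  qed
qed

lemma strongD: "strong_partitive V E X \<Longrightarrow> partitive V E Q \<Longrightarrow> X \<inter> Q \<noteq> {} \<Longrightarrow> X \<subseteq> Q \<or> Q \<subseteq> X"
  unfolding strong_partitive_def by blast

lemma strong_part: "strong_partitive V E X \<Longrightarrow> partitive V E X"
  unfolding strong_partitive_def by blast

lemma maxD: "maximal_strong_partitive V E X \<Longrightarrow> strong_partitive V E X"
  "maximal_strong_partitive V E X \<Longrightarrow> X \<noteq> V"
  "maximal_strong_partitive V E X \<Longrightarrow> strong_partitive V E Y \<Longrightarrow> Y \<noteq> V \<Longrightarrow> X \<subseteq> Y \<Longrightarrow> Y = X"
  unfolding maximal_strong_partitive_def by blast+

lemma CoStep:
  assumes X: "maximal_strong_partitive V E X" "x \<in> X"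
    and P: "partitive V E P" "P \<noteq> V" "X \<subseteq> P" "P \<noteq> X"
    and z0: "z0 \<in> P" "z0 \<notin> cocomp N P x"
  shows "\<forall>y\<in>P - X. \<forall>x'\<in>X. (x', y) \<in> E"
proof -
  define K where "K = cocomp N P x"
  have xP: "x \<in> P" using X P by blast
  have PV: "P \<subseteq> V" using P part_sub by blast
  have KP: "K \<subseteq> P" using cocomp_sub xP K_def by blast
  have KneP: "K \<noteq> P" using z0 K_def by blast
  have Ks: "strong_partitive V E K" using cocomp_strong[OF P(1) xP] KneP K_def by blast
  have KneV: "K \<noteq> V" using KP P(2) PV by blast
  have Xs: "strong_partitive V E X" using maxD X by blast
  have xK: "x \<in> K" using cocomp_self K_def by blast
  have KX: "K \<subseteq> X"
  proof -
    have "K \<subseteq> X \<or> X \<subseteq> K" using strongD[OF Ks strong_part[OF Xs]] xK X(2) by blast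
    then show ?thesis using maxD(3)[OF X(1) Ks KneV] by blast
  qed
  have XK: "X \<subseteq> K"
  proof
    fix x' assume x': "x' \<in> X"
    show "x' \<in> K"
    proof (rule ccontr)
      assume x'K: "x' \<notin> K"
      obtain z where z: "z \<in> P" "z \<notin> X" using P(3,4) by blast
      define Kz where "Kz = cocomp N P z"
      have xKz: "x \<notin> Kz"
      proof
        assume "x \<in> Kz"
        then have "cocomp N P x = Kz" using cocomp_eq Kz_def by blast
        then have "z \<in> K" using cocomp_self K_def Kz_def by metis
        then show False using KX z by blast
      qed
      have KzP: "Kz \<subseteq> P" using cocomp_sub z Kz_def by blast
      have Kzs: "strong_partitive V E Kz" using cocomp_strong[OF P(1) z(1)] xKz xP Kz_def by blast
      have zKz: "z \<in> Kz" using cocomp_self Kz_def by blast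
      have x'Kz: "x' \<notin> Kz"
      proof
        assume "x' \<in> Kz"
        then have "Kz \<subseteq> X \<or> X \<subseteq> Kz" using strongD[OF Kzs strong_part[OF Xs]] x' by blast
        then show False using zKz z xKz X(2) by blast
      qed
      have Mp: "partitive V E (K \<union> Kz)"
      proof (rule partI)
        show "K \<union> Kz \<subseteq> V" using KP KzP PV by blast
        fix a b c assume H: "a \<in> K \<union> Kz" "b \<in> K \<union> Kz" "c \<in> V" "c \<notin> K \<union> Kz" "(a, c) \<in> E"
        show "(b, c) \<in> E"
        proof (cases "c \<in> P")
          case True
          then show ?thesis using H cocomp_closure[OF PV xP] cocomp_closure[OF PV z(1)] K_def Kz_def
            by blast
        next
          case False
          then show ?thesis using H part_adj[OF P(1)] KP KzP by blast
        qed
      qed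
      have "(K \<union> Kz) \<subseteq> X \<or> X \<subseteq> K \<union> Kz" using strongD[OF Xs Mp] xK X(2) by blast
      then show False using zKz z x' x'K x'Kz by blast
    qed
  qed
  show ?thesis
  proof (intro ballI)
    fix y x' assume "y \<in> P - X" "x' \<in> X"
    then show "(x', y) \<in> E" using cocomp_closure[OF PV xP] XK KX K_def by blast
  qed
qed

lemma part_V: "partitive V E V"
  unfolding partitive_def by auto

end

locale cc = ug +
  assumes connE: "connected_graph V E" and connN: "connected_graph V (gcompl V E)"
begin

lemma pathE: "a \<in> V \<Longrightarrow> b \<in> V \<Longrightarrow> (a, b) \<in> (E \<inter> V \<times> V)\<^sup>*"
  using connE unfolding connected_graph_def by blast

lemma pathN: "a \<in> V \<Longrightarrow> b \<in> V \<Longrightarrow> (a, b) \<in> (N \<inter> V \<times> V)\<^sup>*"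
  using connN unfolding connected_graph_def by blast

lemma C0:
  assumes Y: "partitive V E Y" "Y \<noteq> V" and Z: "partitive V E Z" "Z \<noteq> V" and ov: "Y \<inter> Z \<noteq> {}"
  shows "Y \<union> Z \<noteq> V"
proof
  assume U: "Y \<union> Z = V"
  have YV: "Y \<subseteq> V" and ZV: "Z \<subseteq> V" using Y Z part_sub by auto
  obtain y0 where y0: "y0 \<in> Y" "y0 \<in> Z" using ov by blast
  obtain r where r: "r \<in> Z" "r \<notin> Y" using U Y(2) YV by blast
  obtain d0 where d0: "d0 \<in> Y" "d0 \<notin> Z" using U Z(2) ZV by blast
  have key: "(z, d) \<in> E \<longleftrightarrow> (y0, r) \<in> E" if "z \<in> Z" "d \<in> Y" "d \<notin> Z" for z d
  proof -
    have "d \<in> V" using that YV by blast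
    have "(z, d) \<in> E \<longleftrightarrow> (y0, d) \<in> E" using part_adj[OF Z(1) that(1) y0(2) \<open>d \<in> V\<close> that(3)] .
    moreover have "(d, y0) \<in> E \<longleftrightarrow> (y0, r) \<in> E"
      using UT[OF Y(1) Z(1) that(2) that(3) y0 r] by blast
    ultimately show ?thesis using Esym_iff by blast
  qed
  show False
  proof (cases "(y0, r) \<in> E")
    case True
    have "(y0, d0) \<in> (N \<inter> V \<times> V)\<^sup>*" using pathN y0 d0 YV by blast
    from leave_set[OF this y0(2) d0(2)] obtain p q where
      pq: "p \<in> Z" "q \<notin> Z" "(p, q) \<in> N \<inter> V \<times> V" by blast
    then have "q \<in> Y" using U by blast
    then have "(p, q) \<in> E" using key pq True by blast
    then show False using pq N_iff by blast
  next
    case False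
    have "(y0, d0) \<in> (E \<inter> V \<times> V)\<^sup>*" using pathE y0 d0 YV by blast
    from leave_set[OF this y0(2) d0(2)] obtain p q where
      pq: "p \<in> Z" "q \<notin> Z" "(p, q) \<in> E \<inter> V \<times> V" by blast
    then have "q \<in> Y" using U by blast
    then have "(p, q) \<notin> E" using key pq False by blast
    then show False using pq by blast
  qed
qed

lemma BigP:
  assumes X: "maximal_strong_partitive V E X" "x0 \<in> X"
    and P: "partitive V E P" "P \<noteq> V" "X \<subseteq> P" "P \<noteq> X"
    and adjP: "\<forall>y\<in>P - X. \<forall>x\<in>X. (x, y) \<in> E"
  shows False
proof -
  define \<P> where "\<P> = {P'. partitive V E P' \<and> P' \<noteq> V \<and> X \<subseteq> P' \<and> (\<forall>y\<in>P' - X. \<forall>x\<in>X. (x, y) \<in> E)}"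
  define R where "R = \<Union>\<P>"
  have Pin: "P \<in> \<P>" using P adjP \<P>_def by blast
  have Rpart: "partitive V E R" unfolding R_def
    by (rule part_union_family[of _ x0]) (use X \<P>_def in blast)
  have RV: "R \<subseteq> V" using Rpart part_sub by blast
  have XR: "X \<subseteq> R" and PR: "P \<subseteq> R" using Pin R_def P by blast+
  have Radj: "\<forall>y\<in>R - X. \<forall>x\<in>X. (x, y) \<in> E" unfolding R_def \<P>_def by blast
  have Xs: "strong_partitive V E X" using maxD X by blast
  have XneV: "X \<noteq> V" using maxD X by blast
  have XV: "X \<subseteq> V" using Xs strong_part part_sub by blast
  have RneV: "R \<noteq> V"
  proof
    assume RV': "R = V"
    obtain w where w: "w \<in> V" "w \<notin> X" using XneV XV by blast
    have "(x0, w) \<in> (N \<inter> V \<times> V)\<^sup>*" using pathN w X XV by blast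
    from leave_set[OF this X(2) w(2)] obtain p q where
      pq: "p \<in> X" "q \<notin> X" "(p, q) \<in> N \<inter> V \<times> V" by blast
    then have "(p, q) \<in> E" using Radj RV' by blast
    then show False using pq N_iff by blast
  qed
  have Rs: "strong_partitive V E R"
    unfolding strong_partitive_def
  proof (intro conjI allI impI Rpart)
    fix Q assume Q: "partitive V E Q" "R \<inter> Q \<noteq> {}"
    show "R \<subseteq> Q \<or> Q \<subseteq> R"
    proof (rule ccontr)
      assume nn: "\<not> (R \<subseteq> Q \<or> Q \<subseteq> R)"
      have QneV: "Q \<noteq> V" using nn RV by blast
      have cadj: "(x, c) \<in> E" if c: "c \<in> Q" "c \<notin> R" and x: "x \<in> X" for c x
      proof (cases "X \<inter> Q = {}")
        case False
        then have "X \<subseteq> Q \<or> Q \<subseteq> X" using strongD[OF Xs Q(1)] by blast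
        then have XQ: "X \<subseteq> Q" using nn XR by blast
        obtain r where r: "r \<in> R" "r \<notin> Q" using nn by blast
        have "r \<notin> X" using r XQ by blast
        then have "(x, r) \<in> E" using Radj r x by blast
        moreover have "((r, x) \<in> E \<longleftrightarrow> (r, c) \<in> E) \<and> ((r, c) \<in> E \<longleftrightarrow> (x, c) \<in> E)"
          using UT[OF Rpart Q(1) r(1) r(2)] x XR XQ c by blast
        ultimately show ?thesis using Esym_iff by blast
      next
        case True
        obtain q where q: "q \<in> R" "q \<in> Q" using Q(2) by blast
        have "q \<notin> X" using q True by blast
        then have "(x, q) \<in> E" using Radj q x by blast
        moreover have "((x, q) \<in> E \<longleftrightarrow> (x, c) \<in> E)"
          using UT[OF Rpart Q(1) _ _ q c] x XR True by blast
        ultimately show ?thesis by blast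
      qed
      obtain q where q: "q \<in> R" "q \<in> Q" using Q(2) by blast
      have "R \<union> Q \<in> \<P>"
        unfolding \<P>_def
        using part_union2[OF Rpart Q(1) q] C0[OF Rpart RneV Q(1) QneV] Q(2) XR Radj cadj by blast
      then have "Q \<subseteq> R" unfolding R_def by blast
      then show False using nn by blast
    qed
  qed
  have "R = X" using maxD(3)[OF X(1) Rs RneV XR] .
  then show False using PR P by blast
qed

lemma Step:
  assumes X: "maximal_strong_partitive V E X" "x \<in> X"
    and Y: "partitive V E Y" "Y \<noteq> V" "X \<subseteq> Y" "Y \<noteq> X"
  shows "\<exists>P. partitive V E P \<and> P \<noteq> V \<and> X \<subseteq> P \<and> P \<noteq> X \<and>
     ((\<exists>z0\<in>P. z0 \<notin> cocomp N P x) \<or> (\<exists>z0\<in>P. z0 \<notin> cocomp E P x))"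
proof -
  have "\<not> strong_partitive V E Y" using maxD(3)[OF X(1) _ Y(2) Y(3)] Y(4) by blast
  then obtain Q where Q: "partitive V E Q" "Y \<inter> Q \<noteq> {}" "\<not> Y \<subseteq> Q" "\<not> Q \<subseteq> Y"
    using Y(1) unfolding strong_partitive_def by blast
  have YV: "Y \<subseteq> V" using Y part_sub by blast
  have QneV: "Q \<noteq> V" using Q YV by blast
  obtain a1 a2 a3 where a: "a1 \<in> Y" "a1 \<notin> Q" "a2 \<in> Y" "a2 \<in> Q" "a3 \<in> Q" "a3 \<notin> Y"
    using Q by blast
  define P where "P = Y \<union> Q"
  have Pp: "partitive V E P" using part_union2[OF Y(1) Q(1) a(3) a(4)] P_def by blast
  have PneV: "P \<noteq> V" using C0[OF Y(1) Y(2) Q(1) QneV Q(2)] P_def by blast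
  have XP: "X \<subseteq> P" "P \<noteq> X" using Y P_def by blast+
  define same where "same p q \<longleftrightarrow> (p \<in> Y \<longleftrightarrow> q \<in> Y) \<and> (p \<in> Q \<longleftrightarrow> q \<in> Q)" for p q
  define \<tau> where "\<tau> = ((a1, a2) \<in> E)"
  have T1: "(p, q) \<in> E \<longleftrightarrow> \<tau>" if "p \<in> Y" "p \<notin> Q" "q \<in> Y" "q \<in> Q" for p q
    using UT[OF Y(1) Q(1) that a(5) a(6)] UT[OF Y(1) Q(1) that(1,2) a(3,4,5,6)]
      UT[OF Y(1) Q(1) a(1,2,3,4,5,6)] \<tau>_def Esym_iff by metis
  have T2: "(p, r) \<in> E \<longleftrightarrow> \<tau>" if "p \<in> Y" "p \<notin> Q" "r \<in> Q" "r \<notin> Y" for p r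
    using UT[OF Y(1) Q(1) that(1,2) a(3,4) that(3,4)] T1[OF that(1,2) a(3,4)] by blast
  have T3: "(q, r) \<in> E \<longleftrightarrow> \<tau>" if "q \<in> Y" "q \<in> Q" "r \<in> Q" "r \<notin> Y" for q r
    using UT[OF Y(1) Q(1) a(1,2) that] T1[OF a(1,2) that(1,2)] by blast
  have T1': "(q, p) \<in> E \<longleftrightarrow> \<tau>" if "p \<in> Y" "p \<notin> Q" "q \<in> Y" "q \<in> Q" for p q
    using T1[OF that] Esym_iff by blast
  have T2': "(r, p) \<in> E \<longleftrightarrow> \<tau>" if "p \<in> Y" "p \<notin> Q" "r \<in> Q" "r \<notin> Y" for p r
    using T2[OF that] Esym_iff by blast
  have T3': "(r, q) \<in> E \<longleftrightarrow> \<tau>" if "q \<in> Y" "q \<in> Q" "r \<in> Q" "r \<notin> Y" for q r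
    using T3[OF that] Esym_iff by blast
  have unif: "(p, q) \<in> E \<longleftrightarrow> \<tau>" if "p \<in> P" "q \<in> P" "\<not> same p q" for p q
    using that unfolding P_def same_def
    by (cases "p \<in> Y"; cases "p \<in> Q"; cases "q \<in> Y"; cases "q \<in> Q") (auto simp: T1 T2 T3 T1' T2' T3')
  have inv: "cocomp Rel P x \<subseteq> {w. same x w}"
    if Rel: "\<And>p q. p \<in> P \<Longrightarrow> q \<in> P \<Longrightarrow> \<not> same p q \<Longrightarrow> (p, q) \<notin> Rel" for Rel
  proof
    fix w assume "w \<in> cocomp Rel P x"
    then have "(x, w) \<in> (Rel \<inter> P \<times> P)\<^sup>*" unfolding cocomp_def by simp
    then show "w \<in> {w. same x w}"
    proof (induction rule: rtrancl_induct)
      case base then show ?case unfolding same_def by simp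
    next
      case (step y z)
      then have "same y z" using Rel by blast
      then show ?case using step unfolding same_def by simp
    qed
  qed
  have xP: "x \<in> P" using XP X by blast
  obtain z0 where z0: "z0 \<in> P" "\<not> same x z0"
  proof (cases "x \<in> Q")
    case True then show ?thesis using that[of a1] a P_def same_def by blast
  next
    case False then show ?thesis using that[of a2] a P_def same_def by blast
  qed
  show ?thesis
  proof (cases \<tau>)
    case True
    have "z0 \<notin> cocomp N P x"
      using inv[of N] unif True N_iff z0 by blast
    then show ?thesis using Pp PneV XP z0 by blast
  next
    case False
    have "z0 \<notin> cocomp E P x"
      using inv[of E] unif False z0 by blast
    then show ?thesis using Pp PneV XP z0 by blast
  qed
qed

lemma LR:
  assumes F: "partition_on V F" "\<forall>X\<in>F. maximal_strong_partitive V E X" and v: "v \<in> V"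
  shows "Umod V E v \<noteq> V"
proof -
  interpret C: cc V "gcompl V E"
    using undirected_compl[OF ug] connN connected_compl_compl[OF ug] connE
    by unfold_locales auto
  have NN: "gcompl V (gcompl V E) = E" using compl_compl[OF ug] .
  obtain X where X: "X \<in> F" "v \<in> X" using F(1) v unfolding partition_on_def by blast
  have Xm: "maximal_strong_partitive V E X" using F X by blast
  have sub: "Y \<subseteq> X" if Y: "partitive V E Y" "Y \<noteq> V" "v \<in> Y" for Y
  proof (rule ccontr)
    assume nYX: "\<not> Y \<subseteq> X"
    have "X \<subseteq> Y \<or> Y \<subseteq> X" using strongD[OF maxD(1)[OF Xm] Y(1)] X Y by blast
    then have XY: "X \<subseteq> Y" "Y \<noteq> X" using nYX by auto
    from Step[OF Xm X(2) Y(1) Y(2) XY] obtain P where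
      P: "partitive V E P" "P \<noteq> V" "X \<subseteq> P" "P \<noteq> X"
      and alt: "(\<exists>z0\<in>P. z0 \<notin> cocomp N P v) \<or> (\<exists>z0\<in>P. z0 \<notin> cocomp E P v)" by blast
    from alt show False
    proof
      assume "\<exists>z0\<in>P. z0 \<notin> cocomp N P v"
      then obtain z0 where "z0 \<in> P" "z0 \<notin> cocomp N P v" by blast
      from CoStep[OF Xm X(2) P this] have "\<forall>y\<in>P - X. \<forall>x\<in>X. (x, y) \<in> E" .
      from BigP[OF Xm X(2) P this] show False .
    next
      assume "\<exists>z0\<in>P. z0 \<notin> cocomp E P v"
      then obtain z0 where z0: "z0 \<in> P" "z0 \<notin> cocomp (gcompl V (gcompl V E)) P v"
        using NN by auto
      have Xm': "maximal_strong_partitive V (gcompl V E) X" using Xm maxstrong_compl_iff by blast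
      have P': "partitive V (gcompl V E) P" using P(1) partitive_compl_iff by blast
      from C.CoStep[OF Xm' X(2) P' P(2-4) z0] have "\<forall>y\<in>P - X. \<forall>x\<in>X. (x, y) \<in> gcompl V E" .
      from C.BigP[OF Xm' X(2) P' P(2-4) this] show False .
    qed
  qed
  have "Umod V E v \<subseteq> X" unfolding Umod_def using sub by blast
  moreover have "X \<noteq> V" using maxD(2)[OF Xm] .
  moreover have "X \<subseteq> V" using Xm maxD(1) strong_part part_sub by blast
  ultimately show ?thesis by blast
qed

lemma Umod_part: "partitive V E (Umod V E v)"
  unfolding Umod_def by (rule part_union_family[of _ v]) blast

lemma Umod_sub: "Umod V E v \<subseteq> V"
  using Umod_part part_sub by blast

lemma Umod_max: "partitive V E Y \<Longrightarrow> Y \<noteq> V \<Longrightarrow> v \<in> Y \<Longrightarrow> Y \<subseteq> Umod V E v"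
  unfolding Umod_def by blast

lemma Umod_mem: "v \<in> V \<Longrightarrow> w \<in> V \<Longrightarrow> w \<noteq> v \<Longrightarrow> v \<in> Umod V E v"
  using Umod_max[of "{v}" v] part_single by blast

lemma Umod_eq:
  assumes H: "\<forall>v\<in>V. Umod V E v \<noteq> V" and v: "v \<in> V" "v \<in> Umod V E v" and w: "w \<in> Umod V E v"
  shows "Umod V E w = Umod V E v"
proof -
  have wV: "w \<in> V" using w Umod_sub by blast
  have 1: "Umod V E v \<subseteq> Umod V E w" using Umod_max[OF Umod_part H[rule_format, OF v(1)] w] .
  have 2: "Umod V E w \<subseteq> Umod V E v" using Umod_max[OF Umod_part H[rule_format, OF wV]] 1 v(2) by blast
  show ?thesis using 1 2 by blast
qed

lemma Umod_strong:
  assumes H: "\<forall>v\<in>V. Umod V E v \<noteq> V" and v: "v \<in> V" "v \<in> Umod V E v"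
  shows "strong_partitive V E (Umod V E v)"
  unfolding strong_partitive_def
proof (intro conjI allI impI Umod_part)
  fix Q assume Q: "partitive V E Q" "Umod V E v \<inter> Q \<noteq> {}"
  show "Umod V E v \<subseteq> Q \<or> Q \<subseteq> Umod V E v"
  proof (cases "Q = V")
    case True then show ?thesis using Umod_sub by blast
  next
    case False
    obtain q where q: "q \<in> Umod V E v" "q \<in> Q" using Q by blast
    have "Umod V E v \<union> Q \<noteq> V" using C0[OF Umod_part H[rule_format, OF v(1)] Q(1) False Q(2)] .
    moreover have "partitive V E (Umod V E v \<union> Q)" using part_union2[OF Umod_part Q(1) q] .
    ultimately have "Umod V E v \<union> Q \<subseteq> Umod V E v" using Umod_max v(2) by blast
    then show ?thesis by blast
  qed
qed

lemma L:
  assumes H: "\<forall>v\<in>V. Umod V E v \<noteq> V" and two: "a \<in> V" "b \<in> V" "a \<noteq> b"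
  shows "\<exists>F. partition_on V F \<and> F \<noteq> {V} \<and> (\<forall>X\<in>F. maximal_strong_partitive V E X)"
proof -
  have mem: "v \<in> Umod V E v" if "v \<in> V" for v
  proof (cases "v = a")
    case True then show ?thesis using Umod_mem[OF that two(2)] two(3) by blast
  next
    case False then show ?thesis using Umod_mem[OF that two(1)] by blast
  qed
  define F where "F = Umod V E ` V"
  have "partition_on V F"
    unfolding partition_on_def
  proof (intro conjI)
    show "\<Union>F = V"
    proof
      show "\<Union>F \<subseteq> V" unfolding F_def using Umod_sub by blast
      show "V \<subseteq> \<Union>F"
      proof
        fix v assume "v \<in> V"
        then have "Umod V E v \<in> F" "v \<in> Umod V E v" unfolding F_def using mem by auto
        then show "v \<in> \<Union>F" by blast
      qed
    qed
    show "disjoint F" unfolding pairwise_def F_def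
    proof (intro ballI impI)
      fix A B assume AB: "A \<in> Umod V E ` V" "B \<in> Umod V E ` V" "A \<noteq> B"
      then obtain x y where xy: "x \<in> V" "y \<in> V" "A = Umod V E x" "B = Umod V E y" by blast
      show "disjnt A B"
      proof (rule ccontr)
        assume "\<not> disjnt A B"
        then obtain w where "w \<in> A" "w \<in> B" unfolding disjnt_def by blast
        then have "w \<in> Umod V E x" "w \<in> Umod V E y" using xy by auto
        then have "Umod V E w = A" "Umod V E w = B"
          using Umod_eq[OF H xy(1) mem[OF xy(1)], of w] Umod_eq[OF H xy(2) mem[OF xy(2)], of w] xy
          by simp_all
        then show False using AB(3) by simp
      qed
    qed
    show "{} \<notin> F"
    proof
      assume "{} \<in> F"
      then obtain v where "v \<in> V" "Umod V E v = {}" unfolding F_def by auto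
      then show False using mem by blast
    qed
  qed
  moreover have "F \<noteq> {V}"
  proof
    assume "F = {V}"
    moreover have "Umod V E a \<in> F" unfolding F_def using two(1) by blast
    ultimately show False using H two(1) by blast
  qed
  moreover have "\<forall>X\<in>F. maximal_strong_partitive V E X"
  proof
    fix X assume "X \<in> F"
    then obtain v where v: "v \<in> V" "X = Umod V E v" unfolding F_def by blast
    show "maximal_strong_partitive V E X"
      unfolding maximal_strong_partitive_def
    proof (intro conjI allI impI)
      show "strong_partitive V E X" using Umod_strong[OF H v(1) mem[OF v(1)]] v(2) by simp
      show "X \<noteq> V" using H v by blast
      fix Y assume Y: "strong_partitive V E Y" "Y \<noteq> V" "X \<subseteq> Y"
      have "v \<in> Y" using Y(3) v mem by blast
      then have "Y \<subseteq> X" using Umod_max[OF strong_part[OF Y(1)] Y(2)] v(2) by blast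
      then show "Y = X" using Y(3) by blast
    qed
  qed
  ultimately show ?thesis by blast
qed

lemma cc_sym: "color_class E C \<Longrightarrow> (p, q) \<in> C \<Longrightarrow> (q, p) \<in> C"
  using cc_cases by blast

lemma RHS_U:
  assumes H: "\<forall>v\<in>V. Umod V E v \<noteq> V" and two: "a0 \<in> V" "b0 \<in> V" "a0 \<noteq> b0"
  shows "\<exists>M. multiplex V E M \<and> spanned M = V"
proof -
  have mem: "v \<in> Umod V E v" if "v \<in> V" for v
  proof (cases "v = a0")
    case True then show ?thesis using Umod_mem[OF that two(2)] two(3) by blast
  next
    case False then show ?thesis using Umod_mem[OF that two(1)] by blast
  qed
  obtain w where w: "w \<in> V" "w \<notin> Umod V E a0" using H two Umod_sub by blast
  have "(a0, w) \<in> (E \<inter> V \<times> V)\<^sup>*" using pathE two w by blast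
  from leave_set[OF this mem[OF two(1)] w(2)] obtain a b where
    ab: "a \<in> Umod V E a0" "b \<notin> Umod V E a0" "(a, b) \<in> E \<inter> V \<times> V" by blast
  have abE: "(a, b) \<in> E" and aV: "a \<in> V" and bV: "b \<in> V" using ab by auto
  have Ua: "Umod V E a = Umod V E a0" using Umod_eq[OF H two(1) mem[OF two(1)] ab(1)] .
  define C where "C = (Gamma E)\<^sup>+ `` {(a, b)} \<union> ((Gamma E)\<^sup>+ `` {(a, b)})\<inverse>"
  have Ccc: "color_class E C" using cc_of[OF abE] C_def by simp
  have abC: "(a, b) \<in> C" using cc_mem[OF abE] C_def by simp
  have CE: "C \<subseteq> E" using cc_sub[OF Ccc] .
  define Comp where "Comp = {x. (a, x) \<in> C\<^sup>*}"
  have CompV: "Comp \<subseteq> V"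
  proof
    fix x assume "x \<in> Comp"
    then have "(a, x) \<in> C\<^sup>*" unfolding Comp_def by simp
    then show "x \<in> V" using aV CE EV by (induction rule: rtrancl_induct) auto
  qed
  have Cstep: "y \<in> Comp \<Longrightarrow> (y, z) \<in> C \<Longrightarrow> z \<in> Comp" for y z
    unfolding Comp_def by (auto intro: rtrancl_into_rtrancl)
  have same: "(x, c) \<in> E \<longleftrightarrow> (a, c) \<in> E" if "x \<in> Comp" "c \<notin> Comp" for x c
  proof -
    have "(a, x) \<in> C\<^sup>*" using that unfolding Comp_def by simp
    then show ?thesis
    proof (induction rule: rtrancl_induct)
      case base then show ?case by simp
    next
      case (step y z)
      have yC: "y \<in> Comp" using step(1) Comp_def by simp
      have zC: "z \<in> Comp" using Cstep[OF yC step(2)] .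
      have "(y, c) \<in> E \<longleftrightarrow> (z, c) \<in> E"
      proof (rule ccontr)
        assume "\<not> ((y, c) \<in> E \<longleftrightarrow> (z, c) \<in> E)"
        then consider "(y, c) \<in> E" "(z, c) \<notin> E" | "(z, c) \<in> E" "(y, c) \<notin> E" by blast
        then show False
        proof cases
          case 1
          then have "(y, c) \<in> C" using G1[OF Ccc step(2)] by blast
          then show False using Cstep[OF yC] that by blast
        next
          case 2
          then have "(z, c) \<in> C" using G1[OF Ccc cc_sym[OF Ccc step(2)]] by blast
          then show False using Cstep[OF zC] that by blast
        qed
      qed
      then show ?case using step by blast
    qed
  qed
  have Comp_part: "partitive V E Comp"
    by (rule partI[OF CompV]) (use same in blast)
  have aComp: "a \<in> Comp" and bComp: "b \<in> Comp" using abC Comp_def by auto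
  have CompV': "Comp = V"
  proof (rule ccontr)
    assume "Comp \<noteq> V"
    then have "Comp \<subseteq> Umod V E a" using Umod_max[OF Comp_part _ aComp] by blast
    then show False using bComp Ua ab(2) by blast
  qed
  define M where "M = multiplex_of V E {a, b}"
  have CM: "C \<subseteq> M" unfolding M_def multiplex_of_def using Ccc abC abE by blast
  have ME: "M \<subseteq> E" unfolding M_def multiplex_of_def using cc_sub by blast
  have "spanned M = V"
  proof
    show "spanned M \<subseteq> V" unfolding spanned_def using ME EV by fastforce
    show "V \<subseteq> spanned M"
    proof
      fix x assume "x \<in> V"
      then have "(a, x) \<in> C\<^sup>*" using CompV' Comp_def by blast
      then have "x \<in> Domain C \<union> Range C"
      proof (cases rule: rtranclE)
        case base then show ?thesis using abC by blast
      next
        case (step y) then show ?thesis by blast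
      qed
      then show "x \<in> spanned M" unfolding spanned_def using CM by blast
    qed
  qed
  moreover have "simplex V E {a, b}"
    unfolding simplex_def
  proof (intro conjI allI impI)
    show "{a, b} \<subseteq> V" using aV bV by blast
    have "a \<noteq> b" using abE Eirr by blast
    then show "\<exists>x\<in>{a, b}. \<exists>y\<in>{a, b}. x \<noteq> y" by blast
    show "\<forall>x\<in>{a, b}. \<forall>y\<in>{a, b}. x \<noteq> y \<longrightarrow> (x, y) \<in> E" using abE Esym by blast
    fix C' p q r t assume H1: "color_class E C'" "(p, q) \<in> C' \<inter> {a, b} \<times> {a, b}"
      "(r, t) \<in> C' \<inter> {a, b} \<times> {a, b}"
    have "(p, q) \<in> E" "(r, t) \<in> E" using H1 cc_sub by blast+
    then show "{p, q} = {r, t}" using H1 Eirr by auto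
  qed
  ultimately show ?thesis unfolding multiplex_def M_def by blast
qed

lemma Rlim:
  assumes v0: "v0 \<in> V" "Umod V E v0 = V"
  shows "\<not> (\<exists>M. multiplex V E M \<and> spanned M = V)"
proof
  assume "\<exists>M. multiplex V E M \<and> spanned M = V"
  then obtain S where S: "simplex V E S" and span: "spanned (multiplex_of V E S) = V"
    unfolding multiplex_def by blast
  have SV: "S \<subseteq> V" using S unfolding simplex_def by blast
  have clique: "\<And>a b. a \<in> S \<Longrightarrow> b \<in> S \<Longrightarrow> a \<noteq> b \<Longrightarrow> (a, b) \<in> E"
    using S unfolding simplex_def by blast
  have distinct: "\<And>C a b c d. color_class E C \<Longrightarrow> (a, b) \<in> C \<Longrightarrow> a \<in> S \<Longrightarrow> b \<in> S \<Longrightarrow>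
      (c, d) \<in> C \<Longrightarrow> c \<in> S \<Longrightarrow> d \<in> S \<Longrightarrow> {a, b} = {c, d}"
    using S unfolding simplex_def by blast
  obtain s t where st: "s \<in> S" "t \<in> S" "s \<noteq> t" using S unfolding simplex_def by blast
  have sV: "s \<in> V" and tV: "t \<in> V" using st SV by auto
  have inU: "\<exists>Y. partitive V E Y \<and> Y \<noteq> V \<and> v0 \<in> Y \<and> w \<in> Y" if "w \<in> V" for w
    using that v0(2) unfolding Umod_def by blast
  have inPM: "\<exists>Z. partitive V E Z \<and> Z \<noteq> V \<and> s \<in> Z \<and> w \<in> Z" if wV: "w \<in> V" for w
  proof -
    obtain Y1 where Y1: "partitive V E Y1" "Y1 \<noteq> V" "v0 \<in> Y1" "w \<in> Y1" using inU[OF wV] by blast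
    obtain Y2 where Y2: "partitive V E Y2" "Y2 \<noteq> V" "v0 \<in> Y2" "s \<in> Y2" using inU[OF sV] by blast
    have "Y1 \<union> Y2 \<noteq> V" using C0[OF Y1(1,2) Y2(1,2)] Y1(3) Y2(3) by blast
    moreover have "partitive V E (Y1 \<union> Y2)" using part_union2[OF Y1(1) Y2(1) Y1(3) Y2(3)] .
    ultimately show ?thesis using Y1 Y2 by blast
  qed
  have "(s, t) \<in> (N \<inter> V \<times> V)\<^sup>*" using pathN sV tV by blast
  then have "\<exists>Z. partitive V E Z \<and> Z \<noteq> V \<and> s \<in> Z \<and> t \<in> Z \<and> (s, t) \<in> (N \<inter> Z \<times> Z)\<^sup>*"
  proof (induction rule: rtrancl_induct)
    case base then show ?case using inPM[OF sV] by blast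
  next
    case (step y z)
    then obtain Z where Z: "partitive V E Z" "Z \<noteq> V" "s \<in> Z" "y \<in> Z" "(s, y) \<in> (N \<inter> Z \<times> Z)\<^sup>*"
      by blast
    have zV: "z \<in> V" using step(2) by blast
    obtain Z' where Z': "partitive V E Z'" "Z' \<noteq> V" "s \<in> Z'" "z \<in> Z'" using inPM[OF zV] by blast
    have U1: "Z \<union> Z' \<noteq> V" using C0[OF Z(1,2) Z'(1,2)] Z(3) Z'(3) by blast
    have U2: "partitive V E (Z \<union> Z')" using part_union2[OF Z(1) Z'(1) Z(3) Z'(3)] .
    have "(N \<inter> Z \<times> Z)\<^sup>* \<subseteq> (N \<inter> (Z \<union> Z') \<times> (Z \<union> Z'))\<^sup>*" by (rule rtrancl_mono) blast
    then have "(s, y) \<in> (N \<inter> (Z \<union> Z') \<times> (Z \<union> Z'))\<^sup>*" using Z(5) by blast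
    moreover have "(y, z) \<in> N \<inter> (Z \<union> Z') \<times> (Z \<union> Z')" using step(2) Z(4) Z'(4) by blast
    ultimately have "(s, z) \<in> (N \<inter> (Z \<union> Z') \<times> (Z \<union> Z'))\<^sup>*" by (rule rtrancl_into_rtrancl)
    then show ?case using U1 U2 Z(3) Z'(4) by blast
  qed
  then obtain Z where Z: "partitive V E Z" "Z \<noteq> V" "s \<in> Z" "t \<in> Z" "(s, t) \<in> (N \<inter> Z \<times> Z)\<^sup>*"
    by blast
  have ZV: "Z \<subseteq> V" using Z part_sub by blast
  show False
  proof (cases "S \<subseteq> Z")
    case True
    have "multiplex_of V E S \<subseteq> Z \<times> Z"
      unfolding multiplex_of_def
    proof
      fix e assume "e \<in> \<Union>{C. color_class E C \<and> C \<inter> (E \<inter> S \<times> S) \<noteq> {}}"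
      then obtain C x y where C: "color_class E C" "e \<in> C" "(x, y) \<in> C" "x \<in> S" "y \<in> S" by blast
      have "C \<subseteq> Z \<times> Z" using T2[OF Z(1) C(1) C(3)] C True by blast
      then show "e \<in> Z \<times> Z" using C by blast
    qed
    then have "spanned (multiplex_of V E S) \<subseteq> Z" unfolding spanned_def by blast
    then show False using span Z(2) ZV by blast
  next
    case False
    then obtain u where u: "u \<in> S" "u \<notin> Z" by blast
    have uV: "u \<in> V" using u SV by blast
    have us: "u \<noteq> s" "u \<noteq> t" using u Z by auto
    have usE: "(u, s) \<in> E" using clique u(1) st(1) us(1) by blast
    have uz: "(u, z) \<in> E" if "z \<in> Z" for z
      using part_adj[OF Z(1) that Z(3) uV u(2)] usE Esym_iff by blast
    have "((u, s), (u, w)) \<in> (Gamma E)\<^sup>*" if "(s, w) \<in> (N \<inter> Z \<times> Z)\<^sup>*" for w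
      using that
    proof (induction rule: rtrancl_induct)
      case base then show ?case by simp
    next
      case (step y z)
      have "((u, y), (u, z)) \<in> Gamma E" using step(2) uz N_iff by (auto simp: Gamma_iff)
      then show ?case using step(3) by (meson rtrancl_into_rtrancl)
    qed
    then have "((u, s), (u, t)) \<in> (Gamma E)\<^sup>+" using Z(5) Gammas_p[OF usE] by blast
    then have "(u, t) \<in> (Gamma E)\<^sup>+ `` {(u, s)} \<union> ((Gamma E)\<^sup>+ `` {(u, s)})\<inverse>" by blast
    moreover have "(u, s) \<in> (Gamma E)\<^sup>+ `` {(u, s)} \<union> ((Gamma E)\<^sup>+ `` {(u, s)})\<inverse>"
      using cc_mem[OF usE] .
    ultimately have "{u, s} = {u, t}" using distinct[OF cc_of[OF usE]] u(1) st by blast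
    then show False using us st(3) by (metis doubleton_eq_iff)
  qed
qed

end


locale dcB = ug +
  fixes a1 b1
  assumes nd: "a1 \<in> V" "b1 \<in> V" "(a1, b1) \<notin> (N \<inter> V \<times> V)\<^sup>*"
begin

abbreviation "K v \<equiv> cocomp N V v"

lemma K_ne: "v \<in> V \<Longrightarrow> K v \<noteq> V"
proof
  assume "v \<in> V" "K v = V"
  then have "(v, a1) \<in> (N \<inter> V \<times> V)\<^sup>*" "(v, b1) \<in> (N \<inter> V \<times> V)\<^sup>*"
    using nd unfolding cocomp_def by blast+
  then show False using rt_sym nd(3) rtrancl_trans by metis
qed

lemma K_sub: "v \<in> V \<Longrightarrow> K v \<subseteq> V"
  using cocomp_sub by blast

lemma K_strong: "v \<in> V \<Longrightarrow> strong_partitive V E (K v)"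
  using cocomp_strong[OF part_V] K_ne by blast

lemma K_closure: "v \<in> V \<Longrightarrow> u \<in> K v \<Longrightarrow> c \<in> V \<Longrightarrow> c \<notin> K v \<Longrightarrow> (u, c) \<in> E"
  using cocomp_closure[of V v u c] by blast

lemma K_eq: "w \<in> K v \<Longrightarrow> K w = K v"
  by (rule cocomp_eq)

lemma K_self: "v \<in> K v"
  by (rule cocomp_self)

lemma LHS_B: "\<exists>F. partition_on V F \<and> F \<noteq> {V} \<and> (\<forall>X\<in>F. maximal_strong_partitive V E X)"
proof -
  define F where "F = (\<lambda>v. K v) ` V"
  have "partition_on V F"
    unfolding partition_on_def
  proof (intro conjI)
    show "\<Union>F = V"
    proof
      show "\<Union>F \<subseteq> V" unfolding F_def using K_sub by blast
      show "V \<subseteq> \<Union>F"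
      proof
        fix v assume "v \<in> V"
        then have "K v \<in> F" unfolding F_def by blast
        then show "v \<in> \<Union>F" using K_self by blast
      qed
    qed
    show "disjoint F" unfolding pairwise_def F_def
    proof (intro ballI impI)
      fix A B assume AB: "A \<in> (\<lambda>v. K v) ` V" "B \<in> (\<lambda>v. K v) ` V" "A \<noteq> B"
      then obtain x y where xy: "A = K x" "B = K y" by blast
      show "disjnt A B"
      proof (rule ccontr)
        assume "\<not> disjnt A B"
        then obtain w where "w \<in> K x" "w \<in> K y" unfolding disjnt_def xy by blast
        then have "K w = K x" "K w = K y" using K_eq by blast+
        then show False using AB(3) xy by simp
      qed
    qed
    show "{} \<notin> F" unfolding F_def using K_self by blast
  qed
  moreover have "F \<noteq> {V}"
  proof
    assume "F = {V}"
    moreover have "K a1 \<in> F" unfolding F_def using nd by blast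
    ultimately show False using K_ne nd by blast
  qed
  moreover have "\<forall>X\<in>F. maximal_strong_partitive V E X"
  proof
    fix X assume "X \<in> F"
    then obtain v where v: "v \<in> V" "X = K v" unfolding F_def by blast
    show "maximal_strong_partitive V E X"
      unfolding maximal_strong_partitive_def
    proof (intro conjI allI impI)
      show "strong_partitive V E X" using K_strong v by simp
      show "X \<noteq> V" using K_ne v by blast
      fix Y assume Y: "strong_partitive V E Y" "Y \<noteq> V" "X \<subseteq> Y"
      show "Y = X"
      proof (rule ccontr)
        assume "Y \<noteq> X"
        then obtain y where y: "y \<in> Y" "y \<notin> K v" using Y(3) v by blast
        have YV: "Y \<subseteq> V" using Y(1) strong_part part_sub by blast
        obtain u where u: "u \<in> V" "u \<notin> Y" using Y(2) YV by blast
        have disj: "K u \<inter> Y = {}"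
        proof (rule ccontr)
          assume "K u \<inter> Y \<noteq> {}"
          then have "K u \<subseteq> Y \<or> Y \<subseteq> K u" using strongD[OF K_strong[OF u(1)] strong_part[OF Y(1)]] by blast
          moreover have "u \<in> K u" by (rule K_self)
          ultimately have "Y \<subseteq> K u" using u by blast
          then have "v \<in> K u" using Y(3) v K_self by blast
          then have "K v = K u" by (rule K_eq)
          then show False using u Y(3) v K_self by blast
        qed
        have Mp: "partitive V E (K v \<union> K u)"
        proof (rule partI)
          show "K v \<union> K u \<subseteq> V" using K_sub u v by blast
          fix a b c assume H: "a \<in> K v \<union> K u" "b \<in> K v \<union> K u" "c \<in> V" "c \<notin> K v \<union> K u" "(a, c) \<in> E"
          show "(b, c) \<in> E" using H K_closure u(1) v(1) by blast
        qed
        have "Y \<inter> (K v \<union> K u) \<noteq> {}" using Y(3) v K_self by blast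
        then have "Y \<subseteq> K v \<union> K u \<or> K v \<union> K u \<subseteq> Y" using strongD[OF Y(1) Mp] by blast
        then show False using y disj u K_self by blast
      qed
    qed
  qed
  ultimately show ?thesis by blast
qed

definition rep :: "'a \<Rightarrow> 'a" where "rep w = (SOME x. x \<in> K w)"

lemma rep_in: "rep w \<in> K w"
  unfolding rep_def using K_self by (rule someI)

lemma K_rep: "K (rep w) = K w"
  using K_eq[OF rep_in] .

lemma rep_inj: "a \<in> rep ` V \<Longrightarrow> c \<in> rep ` V \<Longrightarrow> K a = K c \<Longrightarrow> a = c"
  using K_rep unfolding rep_def by auto

lemma adj_diff: "x \<in> V \<Longrightarrow> y \<in> V \<Longrightarrow> K x \<noteq> K y \<Longrightarrow> (x, y) \<in> E"
  using K_closure[OF _ K_self] K_eq by metis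

lemma Gamma_inv: "((p, q), (p', q')) \<in> Gamma E \<Longrightarrow> K p = K p' \<and> K q = K q'"
proof -
  assume G: "((p, q), (p', q')) \<in> Gamma E"
  then have V: "p \<in> V" "q \<in> V" "p' \<in> V" "q' \<in> V" using EV by (auto simp: Gamma_iff)
  from G consider "p = p'" "(q, q') \<notin> E" | "q = q'" "(p, p') \<notin> E" by (auto simp: Gamma_iff)
  then show ?thesis
  proof cases
    case 1
    show ?thesis
    proof (cases "q = q'")
      case False
      then have "(q, q') \<in> N" using 1 V N_iff by blast
      then have "q' \<in> K q" using cocomp_step[OF K_self] V by blast
      then show ?thesis using K_eq 1 by metis
    qed (use 1 in simp)
  next
    case 2
    show ?thesis
    proof (cases "p = p'")
      case False
      then have "(p, p') \<in> N" using 2 V N_iff by blast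
      then have "p' \<in> K p" using cocomp_step[OF K_self] V by blast
      then show ?thesis using K_eq 2 by metis
    qed (use 2 in simp)
  qed
qed

lemma Gp_inv: "(e, f) \<in> (Gamma E)\<^sup>+ \<Longrightarrow> K (fst e) = K (fst f) \<and> K (snd e) = K (snd f)"
proof (induction rule: trancl_induct)
  case (base y) then show ?case using Gamma_inv by (cases e; cases y) auto
next
  case (step y z) then show ?case using Gamma_inv by (cases y; cases z) auto
qed

lemma RHS_B: "\<exists>M. multiplex V E M \<and> spanned M = V"
proof -
  define S where "S = rep ` V"
  have SV: "S \<subseteq> V" unfolding S_def using rep_in K_sub by blast
  have exu: "\<exists>u\<in>V. u \<notin> K v" if "v \<in> V" for v using K_ne[OF that] K_sub[OF that] by blast
  have adjS: "(a, b) \<in> E" if "a \<in> S" "b \<in> S" "a \<noteq> b" for a b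
  proof -
    have "K a \<noteq> K b" using rep_inj that S_def by blast
    then show ?thesis using adj_diff that SV by blast
  qed
  have simp: "simplex V E S"
    unfolding simplex_def
  proof (intro conjI allI impI)
    show "S \<subseteq> V" by (rule SV)
    obtain u where u: "u \<in> V" "u \<notin> K a1" using exu nd by blast
    have "K (rep a1) \<noteq> K (rep u)" using K_rep u K_self by metis
    then have "rep a1 \<noteq> rep u" by metis
    then show "\<exists>a\<in>S. \<exists>b\<in>S. a \<noteq> b" using u nd S_def by blast
    show "\<forall>a\<in>S. \<forall>b\<in>S. a \<noteq> b \<longrightarrow> (a, b) \<in> E" using adjS by blast
    fix C a b c d
    assume H: "color_class E C" "(a, b) \<in> C \<inter> S \<times> S" "(c, d) \<in> C \<inter> S \<times> S"
    obtain e where e: "e \<in> E" "C = (Gamma E)\<^sup>+ `` {e} \<union> ((Gamma E)\<^sup>+ `` {e})\<inverse>"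
      using cc_cases[OF H(1)] by blast
    have kk: "(K x = K (fst e) \<and> K y = K (snd e)) \<or> (K y = K (fst e) \<and> K x = K (snd e))"
      if "(x, y) \<in> C" for x y
      using that e Gp_inv by fastforce
    have "(K a = K c \<and> K b = K d) \<or> (K a = K d \<and> K b = K c)"
      using kk[of a b] kk[of c d] H by auto
    moreover have "a \<in> S" "b \<in> S" "c \<in> S" "d \<in> S" using H by auto
    ultimately show "{a, b} = {c, d}" using rep_inj unfolding S_def by blast
  qed
  define M where "M = multiplex_of V E S"
  have ME: "M \<subseteq> E" unfolding M_def multiplex_of_def using cc_sub by blast
  have "spanned M = V"
  proof
    show "spanned M \<subseteq> V" unfolding spanned_def using ME EV by fastforce
    show "V \<subseteq> spanned M"
    proof
      fix v assume v: "v \<in> V"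
      obtain u where u: "u \<in> V" "u \<notin> K v" using exu v by blast
      define a where "a = rep v"
      define b where "b = rep u"
      have Ka: "K a = K v" and Kb: "K b = K u" using K_rep a_def b_def by auto
      have KvKu: "K v \<noteq> K u" using u K_self by metis
      have aS: "a \<in> S" and bS: "b \<in> S" using a_def b_def S_def v u by auto
      have abE: "(a, b) \<in> E" using adjS aS bS Ka Kb KvKu by metis
      have bnot: "b \<notin> K a" using K_eq Ka Kb KvKu by metis
      have bV: "b \<in> V" using bS SV by blast
      have "((a, b), (x, b)) \<in> (Gamma E)\<^sup>*" if "(a, x) \<in> (N \<inter> V \<times> V)\<^sup>*" for x
        using that
      proof (induction rule: rtrancl_induct)
        case base then show ?case by simp
      next
        case (step y z)
        have yK: "y \<in> K a" using step(1) unfolding cocomp_def by simp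
        have zK: "z \<in> K a" using step(1,2) unfolding cocomp_def by (auto intro: rtrancl_into_rtrancl)
        have aV: "a \<in> V" using aS SV by blast
        have "(y, b) \<in> E" "(z, b) \<in> E" using K_closure[OF aV _ bV bnot] yK zK by auto
        then have "((y, b), (z, b)) \<in> Gamma E" using step(2) N_iff by (auto simp: Gamma_iff)
        then show ?case using step(3) by (meson rtrancl_into_rtrancl)
      qed
      moreover have "(a, v) \<in> (N \<inter> V \<times> V)\<^sup>*"
        using Ka K_self[of v] unfolding cocomp_def by (metis mem_Collect_eq)
      ultimately have "((a, b), (v, b)) \<in> (Gamma E)\<^sup>+" using Gammas_p[OF abE] by blast
      then have "(v, b) \<in> (Gamma E)\<^sup>+ `` {(a, b)} \<union> ((Gamma E)\<^sup>+ `` {(a, b)})\<inverse>" by blast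
      moreover have "(a, b) \<in> (Gamma E)\<^sup>+ `` {(a, b)} \<union> ((Gamma E)\<^sup>+ `` {(a, b)})\<inverse>"
        using cc_mem[OF abE] .
      ultimately have "(v, b) \<in> M" unfolding M_def multiplex_of_def
        using cc_of[OF abE] abE aS bS by blast
      then show "v \<in> spanned M" unfolding spanned_def by blast
    qed
  qed
  then show ?thesis using simp unfolding multiplex_def M_def by blast
qed

end


theorem corollary4p11:
  fixes V :: "'a set" and E :: "('a \<times> 'a) set"
  assumes "undirected_graph V E" and "connected_graph V E"
  shows "(\<exists>F. partition_on V F \<and> F \<noteq> {V} \<and> (\<forall>X\<in>F. maximal_strong_partitive V E X))
     \<longleftrightarrow> (\<exists>M. multiplex V E M \<and> spanned M = V)"
proof -
  interpret ug V E by (rule ug.intro) (rule assms(1))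
  have Vne: "V \<noteq> {}" using assms(2) unfolding connected_graph_def by blast
  show ?thesis
  proof (cases "\<exists>a\<in>V. \<exists>b\<in>V. a \<noteq> b")
    case False
    obtain v where v: "v \<in> V" using Vne by blast
    have all: "\<forall>a\<in>V. \<forall>b\<in>V. a = b" using False by simp
    have Vv: "V = {v}"
    proof (intro equalityI subsetI)
      fix w assume "w \<in> V" then show "w \<in> {v}" using all v by simp
    next
      fix w assume "w \<in> {v}" then show "w \<in> V" using v by simp
    qed
    have nL: "\<not> (\<exists>F. partition_on V F \<and> F \<noteq> {V} \<and> (\<forall>X\<in>F. maximal_strong_partitive V E X))"
    proof
      assume "\<exists>F. partition_on V F \<and> F \<noteq> {V} \<and> (\<forall>X\<in>F. maximal_strong_partitive V E X)"
      then obtain F where F: "partition_on V F" "F \<noteq> {V}" by blast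
      have "X = V" if X: "X \<in> F" for X
      proof -
        have "\<Union>F = V" "{} \<notin> F" using F(1) unfolding partition_on_def by auto
        then have "X \<subseteq> V" "X \<noteq> {}" using X by auto
        then show ?thesis using Vv by (metis subset_singletonD)
      qed
      then have sub: "F \<subseteq> {V}" by blast
      have "F \<noteq> {}"
      proof
        assume "F = {}"
        then have "\<Union>F = {}" by simp
        then show False using F(1) Vv unfolding partition_on_def by simp
      qed
      then have "F = {V}" using sub by (metis subset_singletonD)
      then show False using F(2) by simp
    qed
    have nR: "\<not> (\<exists>M. multiplex V E M \<and> spanned M = V)"
    proof
      assume "\<exists>M. multiplex V E M \<and> spanned M = V"
      then obtain S where "simplex V E S" unfolding multiplex_def by blast
      then obtain x y where "x \<in> S" "y \<in> S" "x \<noteq> y" "S \<subseteq> V" unfolding simplex_def by blast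
      then show False using Vv by auto
    qed
    show ?thesis using nL nR by (simp only: simp_thms)
  next
    case True
    then obtain a b where ab: "a \<in> V" "b \<in> V" "a \<noteq> b" by blast
    show ?thesis
    proof (cases "connected_graph V (gcompl V E)")
      case False
      then obtain a1 b1 where nd: "a1 \<in> V" "b1 \<in> V" "(a1, b1) \<notin> (gcompl V E \<inter> V \<times> V)\<^sup>*"
        using Vne unfolding connected_graph_def by blast
      interpret dcB V E a1 b1 by (rule dcB.intro, rule ug_axioms, rule dcB_axioms.intro, rule nd(1), rule nd(2), rule nd(3))
      show ?thesis using LHS_B RHS_B by blast
    next
      case True
      interpret cc V E by (rule cc.intro, rule ug_axioms, rule cc_axioms.intro, rule assms(2), rule True)
      show ?thesis
      proof (cases "\<forall>v\<in>V. Umod V E v \<noteq> V")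
        case True
        show ?thesis using L[OF True ab] RHS_U[OF True ab] by blast
      next
        case False
        then obtain v0 where v0: "v0 \<in> V" "Umod V E v0 = V" by blast
        have nL: "\<not> (\<exists>F. partition_on V F \<and> F \<noteq> {V} \<and> (\<forall>X\<in>F. maximal_strong_partitive V E X))"
        proof
          assume "\<exists>F. partition_on V F \<and> F \<noteq> {V} \<and> (\<forall>X\<in>F. maximal_strong_partitive V E X)"
          then obtain F where F: "partition_on V F" "\<forall>X\<in>F. maximal_strong_partitive V E X" by blast
          show False using LR[OF F v0(1)] v0(2) by simp
        qed
        have nR: "\<not> (\<exists>M. multiplex V E M \<and> spanned M = V)" using Rlim[OF v0] .
        show ?thesis using nL nR by blast
      qed
    qed
  qed
qed

end
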